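(* Let $\mathbf M=(M_p)_{p\in\mathbb N_0}$ and $\mathbf N=(N_p)_{p\in\mathbb N_0}$ be sequences of positive reals with $M_0=N_0=1$ satisfying $M_p^2\le M_{p-1}M_{p+1}$ and $N_p^2\le N_{p-1}N_{p+1}$ for all $p\in\mathbb N$. Then the following are equivalent: (i) there exists $A\ge1$ such that $M_{p+1}\le A^{p+1}N_p$ for all $p\in\mathbb N_0$; (ii) there exist $A\ge1$ and $B>0$ such that $\omega_{\mathbf N}(t)+\log t\le\omega_{\mathbf M}(At)+B$ for all $t>0$.
   Context: For a sequence $\mathbf M=(M_p)_{p\in\mathbb N_0}$ with $M_0=1$, the associated function is $\omega_{\mathbf M}(t)=\sup_{p\in\mathbb N_0}\log\frac{|t|^p}{M_p}$, $t\in\mathbb R$ (with $0^0=1$). *)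

theory Defs
  imports Complex_Main "HOL-Library.Extended_Real"
begin

text \<open>Associated function omega_M(t) = sup_p log(|t|^p / M_p), valued in the extended
  reals (the supremum may be infinite); log(0) is taken as minus infinity (only relevant for t = 0,
  p > 0).\<close>
definition assoc_fun :: "(nat \<Rightarrow> real) \<Rightarrow> real \<Rightarrow> ereal" where
  "assoc_fun M t = (SUP p\<in>(UNIV::nat set).
      (if \<bar>t\<bar> ^ p / M p > 0 then ereal (ln (\<bar>t\<bar> ^ p / M p)) else -\<infinity>))"

end

theory Submission
  imports Defs
begin

lemma assoc_pos: "t > 0 \<Longrightarrow> (\<And>p. M p > 0) \<Longrightarrow>
   assoc_fun M t = (SUP p. ereal (ln (t ^ p / M p)))"
  unfolding assoc_fun_def by (intro SUP_cong) auto

lemma lc_peak: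
  fixes M :: "nat \<Rightarrow> real"
  assumes Mpos: "\<And>p. M p > 0"
    and Mlc: "\<And>p. p \<ge> 1 \<Longrightarrow> (M p)^2 \<le> M (p - 1) * M (p + 1)"
  shows "(M (n+1) / M n) ^ q / M q \<le> (M (n+1) / M n) ^ (n+1) / M (n+1)"
proof -
  define g where "g k = M (k+1) / M k" for k
  define s where "s = g n"
  have gi: "g k \<le> g (Suc k)" for k
  proof -
    have "(M (k+1))^2 \<le> M k * M (k+2)" using Mlc[of "k+1"] by simp
    then show ?thesis unfolding g_def using Mpos[of k] Mpos[of "k+1"] Mpos[of "k+2"]
      by (simp add: field_simps power2_eq_square)
  qed
  have mono: "incseq g" using gi by (rule incseq_SucI)
  have spos: "s > 0" unfolding s_def g_def using Mpos by simp
  define f where "f q = s ^ q / M q" for q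
  have up: "f q \<le> f (Suc q)" if "q \<le> n" for q
  proof -
    have "g q \<le> s" unfolding s_def using mono that by (simp add: incseq_def)
    hence "M (q+1) \<le> s * M q" unfolding g_def using Mpos[of q] by (simp add: field_simps)
    thus ?thesis unfolding f_def using Mpos[of q] Mpos[of "Suc q"] spos
      by (simp add: field_simps)
  qed
  have down: "f (Suc q) \<le> f q" if "n \<le> q" for q
  proof -
    have "s \<le> g q" unfolding s_def using mono that by (simp add: incseq_def)
    hence "s * M q \<le> M (q+1)" unfolding g_def using Mpos[of q] by (simp add: field_simps)
    thus ?thesis unfolding f_def using Mpos[of q] Mpos[of "Suc q"] spos
      by (simp add: field_simps)
  qed
  have A: "f (n + 1 - k) \<le> f (n+1)" for k
  proof (induction k)
    case (Suc k)
    show ?case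
    proof (cases "k \<le> n")
      case True
      have "n + 1 - Suc k = n - k" "n + 1 - k = Suc (n - k)" using True by auto
      then show ?thesis using up[of "n-k"] Suc by auto
    next
      case False
      then have "n + 1 - Suc k = n + 1 - k" by auto
      then show ?thesis using Suc by simp
    qed
  qed simp
  have B: "f (n + 1 + k) \<le> f (n+1)" for k
  proof (induction k)
    case (Suc k)
    show ?case using down[of "n+1+k"] Suc by simp
  qed simp
  have "f q \<le> f (n+1)"
  proof (cases "q \<le> n + 1")
    case True
    then show ?thesis using A[of "n+1-q"] by simp
  next
    case False
    then show ?thesis using B[of "q - (n+1)"] by simp
  qed
  thus ?thesis unfolding f_def s_def g_def .
qed

theorem lemma2p2:
  fixes M N :: "nat \<Rightarrow> real"
  assumes Mpos: "\<And>p. M p > 0" and Npos: "\<And>p. N p > 0"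
    and M0: "M 0 = 1" and N0: "N 0 = 1"
    and Mlc: "\<And>p. p \<ge> 1 \<Longrightarrow> (M p)^2 \<le> M (p - 1) * M (p + 1)"
    and Nlc: "\<And>p. p \<ge> 1 \<Longrightarrow> (N p)^2 \<le> N (p - 1) * N (p + 1)"
  shows "(\<exists>A\<ge>1. \<forall>p. M (p + 1) \<le> A ^ (p + 1) * N p) \<longleftrightarrow>
         (\<exists>A\<ge>1. \<exists>B>0. \<forall>t>0.
            assoc_fun N t + ereal (ln t) \<le> assoc_fun M (A * t) + ereal B)"
proof
  assume "\<exists>A\<ge>1. \<forall>p. M (p + 1) \<le> A ^ (p + 1) * N p"
  then obtain A where A1: "A \<ge> 1" and hA: "\<And>p. M (p + 1) \<le> A ^ (p + 1) * N p" by blast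
  show "\<exists>A\<ge>1. \<exists>B>0. \<forall>t>0.
            assoc_fun N t + ereal (ln t) \<le> assoc_fun M (A * t) + ereal B"
  proof -
   have "\<forall>t>0. assoc_fun N t + ereal (ln t) \<le> assoc_fun M (A * t) + ereal 1"
   proof (intro allI impI)
    fix t :: real assume t: "t > 0"
    have At: "A * t > 0" using A1 t by simp
    have "assoc_fun N t + ereal (ln t) = (SUP p. ereal (ln (t ^ p / N p)) + ereal (ln t))"
      unfolding assoc_pos[OF t Npos] by (rule SUP_ereal_add_left[symmetric]) auto
    also have "\<dots> \<le> assoc_fun M (A * t) + ereal 1"
    proof (rule SUP_least)
      fix p :: nat
      have "ereal (ln (t ^ p / N p)) + ereal (ln t) = ereal (ln (t ^ (p+1) / N p))"
        using t Npos[of p] by (simp add: ln_div ln_mult)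
      also have "\<dots> \<le> ereal (ln ((A*t) ^ (p+1) / M (p+1)))"
      proof -
        have "t ^ (p+1) / N p \<le> (A*t) ^ (p+1) / M (p+1)"
          using hA[of p] Mpos[of "p+1"] Npos[of p] t
          by (simp add: field_simps power_mult_distrib mult_left_mono)
        moreover have "t ^ (p+1) / N p > 0" using t Npos[of p] by simp
        ultimately show ?thesis by simp
      qed
      also have "\<dots> \<le> assoc_fun M (A * t)"
        unfolding assoc_pos[OF At Mpos] by (rule SUP_upper) simp
      also have "\<dots> \<le> assoc_fun M (A * t) + ereal 1"
        by (cases "assoc_fun M (A * t)") auto
      finally show "ereal (ln (t ^ p / N p)) + ereal (ln t) \<le> assoc_fun M (A * t) + ereal 1" .
    qed
    finally show "assoc_fun N t + ereal (ln t) \<le> assoc_fun M (A * t) + ereal 1" .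
   qed
   then show ?thesis using A1 by (intro exI[of _ A] conjI exI[of _ "1::real"]) auto
  qed
next
  assume "\<exists>A\<ge>1. \<exists>B>0. \<forall>t>0.
            assoc_fun N t + ereal (ln t) \<le> assoc_fun M (A * t) + ereal B"
  then obtain A B where A1: "A \<ge> 1" and B: "B > 0"
    and h: "\<And>t. t > 0 \<Longrightarrow> assoc_fun N t + ereal (ln t) \<le> assoc_fun M (A * t) + ereal B"
    by blast
  show "\<exists>A\<ge>1. \<forall>p. M (p + 1) \<le> A ^ (p + 1) * N p"
  proof (intro exI[of _ "exp B * A"] conjI allI)
    show "1 \<le> exp B * A" 
    proof -
      have "1 \<le> exp B" using B by simp
      then show ?thesis using A1 by (metis mult_mono' mult_1 zero_le_one)
    qed
  next
    fix p :: nat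
    define s where "s = M (p+1) / M p"
    define t where "t = s / A"
    have s: "s > 0" unfolding s_def using Mpos by simp
    have t: "t > 0" unfolding t_def using s A1 by simp
    have At: "A * t = s" unfolding t_def using A1 by simp
    have "assoc_fun M s \<le> ereal (ln (s ^ (p+1) / M (p+1)))"
      unfolding assoc_pos[OF s Mpos]
    proof (rule SUP_least)
      fix q
      have "s ^ q / M q \<le> s ^ (p+1) / M (p+1)"
        unfolding s_def by (rule lc_peak[OF Mpos Mlc])
      then show "ereal (ln (s ^ q / M q)) \<le> ereal (ln (s ^ (p + 1) / M (p + 1)))"
        using s Mpos[of q] by (subst ereal_less_eq(3), intro ln_mono) auto
    qed
    moreover have "ereal (ln (t ^ p / N p)) + ereal (ln t) \<le> assoc_fun N t + ereal (ln t)"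
    proof -
      have "ereal (ln (t ^ p / N p)) \<le> assoc_fun N t"
        unfolding assoc_pos[OF t Npos] by (rule SUP_upper) simp
      then show ?thesis by (rule add_right_mono)
    qed
    ultimately have "ereal (ln (t ^ p / N p)) + ereal (ln t) \<le> ereal (ln (s ^ (p+1) / M (p+1))) + ereal B"
      using h[OF t] At by (metis add_right_mono order_trans)
    hence "ln (t ^ p / N p) + ln t \<le> ln (s ^ (p+1) / M (p+1)) + B" by simp
    hence "ln (t ^ (p+1) / N p) \<le> ln (exp B * s ^ (p+1) / M (p+1))"
      using t s Npos[of p] Mpos[of "p+1"] by (simp add: ln_div ln_mult)
    hence le: "t ^ (p+1) / N p \<le> exp B * s ^ (p+1) / M (p+1)"
      using t s Npos[of p] Mpos[of "p+1"] by simp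
    have "s = A * t" using At by simp
    hence "M (p+1) \<le> exp B * A ^ (p+1) * N p"
      using le t Npos[of p] Mpos[of "p+1"] A1
      by (simp add: field_simps power_mult_distrib)
    also have "\<dots> \<le> (exp B * A) ^ (p+1) * N p"
    proof -
      have "exp B \<le> exp B ^ (p+1)" using B by (simp add: power_increasing[of 1 "p+1" "exp B", simplified])
      then show ?thesis using Npos[of p] A1
        by (simp add: power_mult_distrib mult_right_mono)
    qed
    finally show "M (p + 1) \<le> (exp B * A) ^ (p + 1) * N p" .
  qed
qed

end
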